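(* There exists $\varepsilon_0>0$ such that for all $\varepsilon\in(0,\varepsilon_0)$ the following holds. Let $R^*\in\{R^{(1)},R^{(2)}\}$, let $\widehat T$ be a directed tree on $\{X,Y,Z\}$ satisfying $D_{\mathrm{KL}}(R^*\,\|\,R^*_{\widehat T})\le\min_TD_{\mathrm{KL}}(R^*\,\|\,R^*_T)+\frac{\varepsilon}{100}$ (minimum over directed trees $T$ on $\{X,Y,Z\}$), and let $\widehat R=\arg\min_{R\in\{R^{(1)},R^{(2)}\}}D_{\mathrm{KL}}(R\,\|\,R_{\widehat T})$. Then $\widehat R=R^*$.
   Context: Let $H,N_1,N_2,N_3$ be independent $\mathcal{N}(0,1)$ variables. $Q^{(1)}$: $X=(1+\varepsilon)H+N_1$, $Y=H+N_2$, $Z=H+N_3$. $Q^{(2)}$: $X=H+N_1$, $Y=(1+\varepsilon)H+N_2$, $Z=H+N_3$. $R^{(1)},R^{(2)}$ are the marginal distributions of $(X,Y,Z)$ under $Q^{(1)},Q^{(2)}$ respectively. A directed tree on $\{X,Y,Z\}$ is a directed graph with a root from which every other vertex is reached by exactly one directed path. For a distribution $R$ and a directed tree $T$, $R_T=\arg\min_QD_{\mathrm{KL}}(R\,\|\,Q)$ over Gaussian $Q$ whose density factorizes as $\prod_vQ(v\mid\mathrm{pa}_T(v))$. *)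

theory Defs
  imports "HOL-Analysis.Analysis"
begin

text \<open>Variables X, Y, Z are the coordinates 1, 2, 3 of the index type 3
 (vertices of the graph are elements of type 3).
 A (nondegenerate) Gaussian distribution on R^3 is given by a mean vector and a
 symmetric positive definite covariance matrix.\<close>

type_synonym gauss3 = "(real^3) \<times> (real^3^3)"

definition pos_def3 :: "real^3^3 \<Rightarrow> bool" where
  "pos_def3 S \<longleftrightarrow> transpose S = S \<and> (\<forall>x. x \<noteq> 0 \<longrightarrow> x \<bullet> (S *v x) > 0)"

definition is_gauss3 :: "gauss3 \<Rightarrow> bool" where
  "is_gauss3 Q \<longleftrightarrow> pos_def3 (snd Q)"

definition gdens3 :: "gauss3 \<Rightarrow> real^3 \<Rightarrow> real" where
  "gdens3 Q x = (let mu = fst Q; S = snd Q in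
     exp (- (1/2) * ((x - mu) \<bullet> (matrix_inv S *v (x - mu)))) / sqrt ((2*pi)^3 * det S))"

definition gdens1 :: "real \<Rightarrow> real \<Rightarrow> real \<Rightarrow> real" where
  "gdens1 m s t = exp (- (t - m)\<^sup>2 / (2 * s)) / sqrt (2 * pi * s)"

definition gdens2 :: "real \<Rightarrow> real \<Rightarrow> real \<Rightarrow> real \<Rightarrow> real \<Rightarrow> real \<Rightarrow> real \<Rightarrow> real" where
  "gdens2 mu mv suu suv svv tu tv =
     (let d = suu * svv - suv\<^sup>2;
          q = (svv * (tu - mu)\<^sup>2 - 2 * suv * (tu - mu) * (tv - mv) + suu * (tv - mv)\<^sup>2) / d
      in exp (- q / 2) / (2 * pi * sqrt d))"

definition marg1 :: "gauss3 \<Rightarrow> 3 \<Rightarrow> real^3 \<Rightarrow> real" where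
  "marg1 Q v x = gdens1 (fst Q $ v) (snd Q $ v $ v) (x $ v)"

definition cond1 :: "gauss3 \<Rightarrow> 3 \<Rightarrow> 3 \<Rightarrow> real^3 \<Rightarrow> real" where
  "cond1 Q v u x =
     gdens2 (fst Q $ u) (fst Q $ v) (snd Q $ u $ u) (snd Q $ u $ v) (snd Q $ v $ v) (x $ u) (x $ v)
     / marg1 Q u x"

definition is_walk :: "(3 \<times> 3) set \<Rightarrow> 3 list \<Rightarrow> bool" where
  "is_walk E p \<longleftrightarrow> p \<noteq> [] \<and> (\<forall>i. Suc i < length p \<longrightarrow> (p ! i, p ! Suc i) \<in> E)"

definition dtree :: "(3 \<times> 3) set \<Rightarrow> bool" where
  "dtree E \<longleftrightarrow> (\<exists>r. \<forall>v. v \<noteq> r \<longrightarrow> (\<exists>!p. is_walk E p \<and> hd p = r \<and> last p = v))"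

text \<open>Factor Q(v | pa_T(v)); in a directed tree each vertex has at most one parent.\<close>
definition factor :: "(3 \<times> 3) set \<Rightarrow> gauss3 \<Rightarrow> 3 \<Rightarrow> real^3 \<Rightarrow> real" where
  "factor E Q v x = (if \<exists>u. (u, v) \<in> E then cond1 Q v (THE u. (u, v) \<in> E) x else marg1 Q v x)"

definition factorizes :: "(3 \<times> 3) set \<Rightarrow> gauss3 \<Rightarrow> bool" where
  "factorizes E Q \<longleftrightarrow> (\<forall>x. gdens3 Q x = (\<Prod>v\<in>UNIV. factor E Q v x))"

definition KL3 :: "gauss3 \<Rightarrow> gauss3 \<Rightarrow> real" where
  "KL3 P Q = (1/2) * (trace (matrix_inv (snd Q) ** snd P)
      + (fst Q - fst P) \<bullet> (matrix_inv (snd Q) *v (fst Q - fst P)) - 3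
      + ln (det (snd Q) / det (snd P)))"

text \<open>D(R || R_T) = min over Gaussians Q factorizing along T of D(R || Q).\<close>
definition KL_tree :: "gauss3 \<Rightarrow> (3 \<times> 3) set \<Rightarrow> real" where
  "KL_tree R T = (INF Q \<in> {Q. is_gauss3 Q \<and> factorizes T Q}. KL3 R Q)"

text \<open>The distributions R^(1), R^(2): X = a1 H + N1, Y = a2 H + N2, Z = a3 H + N3,
 so the mean is 0 and the covariance is a a^T + I.\<close>
definition latent_model :: "real^3 \<Rightarrow> gauss3" where
  "latent_model a = (0, (\<chi> i j. a $ i * a $ j + (if i = j then 1 else 0)))"

definition R1 :: "real \<Rightarrow> gauss3" where
  "R1 \<epsilon> = latent_model (vector [1 + \<epsilon>, 1, 1])"

definition R2 :: "real \<Rightarrow> gauss3" where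
  "R2 \<epsilon> = latent_model (vector [1, 1 + \<epsilon>, 1])"

end

theory Submission
  imports Defs
begin


lemma klin: fixes k x :: real assumes "k > 0" "x > 0" shows "k * x - ln k \<ge> 1 + ln x"
proof -
  have "ln (k*x) \<le> k*x - 1" using ln_le_minus_one assms by simp
  thus ?thesis using assms by (simp add: ln_mult)
qed

lemma lower_core:
  fixes kaa kbb kcc kab kcb paa pbb pcc pab pcb :: real
  assumes kaa: "kaa > 0" and kcc: "kcc > 0"
    and D: "kaa*kbb*kcc - kab^2*kcc - kcb^2*kaa > 0"
    and pbb: "pbb > 0" and sa: "paa*pbb - pab^2 > 0" and sc: "pcc*pbb - pcb^2 > 0"
  shows "kaa*paa + kbb*pbb + kcc*pcc + 2*kab*pab + 2*kcb*pcb
           - ln (kaa*kbb*kcc - kab^2*kcc - kcb^2*kaa)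
         \<ge> 3 + ln (paa*pbb - pab^2) + ln (pcc*pbb - pcb^2) - ln pbb"
proof -
  define al where "al = kab/kaa"
  define ga where "ga = kcb/kcc"
  define w where "w = kbb - kab^2/kaa - kcb^2/kcc"
  have Dw: "kaa*kbb*kcc - kab^2*kcc - kcb^2*kaa = kaa*kcc*w"
    using kaa kcc by (simp add: w_def field_simps power2_eq_square)
  have w: "w > 0" using D Dw kaa kcc by (metis mult_pos_pos zero_less_mult_pos)
  define xa where "xa = paa + 2*al*pab + al^2*pbb"
  define xc where "xc = pcc + 2*ga*pcb + ga^2*pbb"
  have xa: "xa \<ge> (paa*pbb - pab^2)/pbb"
  proof -
    have "xa - (paa*pbb - pab^2)/pbb = (al*pbb + pab)^2/pbb"
      using pbb by (simp add: xa_def field_simps power2_eq_square)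
    also have "\<dots> \<ge> 0" using pbb by simp
    finally show ?thesis by simp
  qed
  have xc: "xc \<ge> (pcc*pbb - pcb^2)/pbb"
  proof -
    have "xc - (pcc*pbb - pcb^2)/pbb = (ga*pbb + pcb)^2/pbb"
      using pbb by (simp add: xc_def field_simps power2_eq_square)
    also have "\<dots> \<ge> 0" using pbb by simp
    finally show ?thesis by simp
  qed
  have pa: "(paa*pbb - pab^2)/pbb > 0" using sa pbb by simp
  have pc: "(pcc*pbb - pcb^2)/pbb > 0" using sc pbb by simp
  have xap: "xa > 0" using xa pa by linarith

  have xcp: "xc > 0" using xc pc by linarith
  have tr: "kaa*paa + kbb*pbb + kcc*pcc + 2*kab*pab + 2*kcb*pcb = kaa*xa + kcc*xc + w*pbb"
    using kaa kcc by (simp add: xa_def xc_def w_def al_def ga_def field_simps power2_eq_square)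
  have lnD: "ln (kaa*kbb*kcc - kab^2*kcc - kcb^2*kaa) = ln kaa + ln kcc + ln w"
    using Dw kaa kcc w by (simp add: ln_mult)
  have 1: "kaa*xa - ln kaa \<ge> 1 + ln xa" using klin kaa xap by blast
  have 2: "kcc*xc - ln kcc \<ge> 1 + ln xc" using klin kcc xcp by blast
  have 3: "w*pbb - ln w \<ge> 1 + ln pbb" using klin w pbb by blast
  have 4: "ln xa \<ge> ln (paa*pbb - pab^2) - ln pbb"
  proof -
    have "ln (paa*pbb - pab^2) - ln pbb = ln ((paa*pbb - pab^2)/pbb)" using pbb sa by (simp add: ln_div)
    also have "\<dots> \<le> ln xa" using xa pa by simp
    finally show ?thesis .
  qed
  have 5: "ln xc \<ge> ln (pcc*pbb - pcb^2) - ln pbb"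
  proof -
    have "ln (pcc*pbb - pcb^2) - ln pbb = ln ((pcc*pbb - pcb^2)/pbb)" using pbb sc by (simp add: ln_div)
    also have "\<dots> \<le> ln xc" using xc pc by simp
    finally show ?thesis .
  qed
  show ?thesis using tr lnD 1 2 3 4 5 by linarith
qed

lemma inv_unique:
  fixes S K :: "real^'n^'n"
  assumes "S ** K = mat 1" shows "matrix_inv S = K"
proof -
  have KS: "K ** S = mat 1" using assms matrix_left_right_inverse by blast
  have ex: "\<exists>A'. S ** A' = mat 1 \<and> A' ** S = mat 1" using assms KS by blast
  obtain K' where K': "S ** K' = mat 1 \<and> K' ** S = mat 1" "matrix_inv S = K'"
    using someI_ex[OF ex] unfolding matrix_inv_def by blast
  have "K' = K' ** (S ** K)" using assms by simp
  also have "\<dots> = (K' ** S) ** K" by (simp add: matrix_mul_assoc)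
  also have "\<dots> = K" using K' by simp
  finally show ?thesis using K' by simp
qed

lemma posdef_inv:
  assumes "pos_def3 S"
  shows "S ** matrix_inv S = mat 1" "matrix_inv S ** S = mat 1"
proof -
  have "\<forall>x. S *v x = 0 \<longrightarrow> x = 0"
  proof (intro allI impI)
    fix x assume "S *v x = 0"
    then have "x \<bullet> (S *v x) = 0" by simp
    then show "x = 0" using assms unfolding pos_def3_def by force
  qed
  then obtain B where "B ** S = mat 1" using matrix_left_invertible_ker by blast
  then have "S ** B = mat 1" using matrix_left_right_inverse by blast
  then have "matrix_inv S = B" by (rule inv_unique)
  then show "S ** matrix_inv S = mat 1" "matrix_inv S ** S = mat 1"
    using \<open>B ** S = mat 1\<close> \<open>S ** B = mat 1\<close> by auto
qed

lemma posdef_inv_sym: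
  assumes "pos_def3 S" shows "transpose (matrix_inv S) = matrix_inv S"
proof -
  have St: "transpose S = S" using assms unfolding pos_def3_def by simp
  have "transpose (S ** matrix_inv S) = mat 1" using posdef_inv[OF assms] by (simp add: transpose_mat)
  then have "transpose (matrix_inv S) ** S = mat 1" by (simp add: matrix_transpose_mul St)
  then have "S ** transpose (matrix_inv S) = mat 1" using matrix_left_right_inverse by blast
  then show ?thesis using inv_unique by metis
qed

lemma posdef_inv_pos:
  assumes "pos_def3 S" "y \<noteq> 0" shows "y \<bullet> (matrix_inv S *v y) > 0"
proof -
  define z where "z = matrix_inv S *v y"
  have Sz: "S *v z = y" unfolding z_def
    by (simp add: matrix_vector_mul_assoc posdef_inv[OF assms(1)])
  have "z \<noteq> 0" using Sz assms(2) by auto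
  then have "z \<bullet> (S *v z) > 0" using assms(1) unfolding pos_def3_def by blast
  then show ?thesis using Sz by (simp add: z_def inner_commute)
qed

lemma posdef_inv_nonneg:
  assumes "pos_def3 S" shows "y \<bullet> (matrix_inv S *v y) \<ge> 0"
  using posdef_inv_pos[OF assms, of y] by (cases "y = 0") auto

lemma posdef_det:
  assumes "pos_def3 S" shows "det S * det (matrix_inv S) = 1"
  using posdef_inv[OF assms] by (metis det_I det_mul)




lemma univ3: fixes a b c :: 3 assumes "distinct [a,b,c]" shows "UNIV = {a,b,c}"
proof -
  have "card {a,b,c} = card (UNIV::3 set)" using assms by simp
  then show ?thesis using card_subset_eq[of "UNIV::3 set" "{a,b,c}"] by simp
qed

lemma ex3: fixes r :: 3 shows "\<exists>a c. distinct [r,a,c]"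
proof -
  have "r = 1 \<or> r = 2 \<or> r = 3" using exhaust_3 by blast
  then show ?thesis
  proof (elim disjE)
    assume "r = 1" then show ?thesis by (intro exI[of _ 2] exI[of _ 3]) simp
  next
    assume "r = 2" then show ?thesis by (intro exI[of _ 1] exI[of _ 3]) simp
  next
    assume "r = 3" then show ?thesis by (intro exI[of _ 1] exI[of _ 2]) simp
  qed
qed

lemma walk_append:
  assumes "is_walk E p" "is_walk E q" "(last p, hd q) \<in> E"
  shows "is_walk E (p @ q)"
  unfolding is_walk_def
proof (intro conjI allI impI)
  show "p @ q \<noteq> []" using assms(1) by (simp add: is_walk_def)
next
  fix i assume i: "Suc i < length (p @ q)"
  have pne: "p \<noteq> []" and qne: "q \<noteq> []" using assms(1,2) by (auto simp: is_walk_def)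
  consider "Suc i < length p" | "Suc i = length p" | "Suc i > length p" by linarith
  then show "((p @ q) ! i, (p @ q) ! Suc i) \<in> E"
  proof cases
    case 1 then show ?thesis using assms(1) by (simp add: nth_append is_walk_def)
  next
    case 2
    then have ii: "i = length p - 1" by simp
    then have "(p @ q) ! i = last p" using pne by (simp add: nth_append last_conv_nth)
    moreover have "(p @ q) ! Suc i = hd q" using 2 qne by (simp add: nth_append hd_conv_nth)
    ultimately show ?thesis using assms(3) by simp
  next
    case 3
    then have "(p @ q) ! i = q ! (i - length p)" "(p @ q) ! Suc i = q ! Suc (i - length p)"
      by (auto simp: nth_append Suc_diff_le)
    moreover have "Suc (i - length p) < length q" using i 3 by auto
    ultimately show ?thesis using assms(2) by (simp add: is_walk_def)
  qed
qed

lemma walk_single: "is_walk E [v]" by (simp add: is_walk_def)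

lemma dtree_shape:
  assumes "dtree T"
  shows "\<exists>a b c. distinct [a,b,c] \<and> (T = {(b,a),(b,c)} \<or> T = {(a,b),(b,c)})"
proof -
  obtain r where H: "\<And>v. v \<noteq> r \<Longrightarrow> \<exists>!p. is_walk T p \<and> hd p = r \<and> last p = v"
    using assms unfolding dtree_def by blast
  define W where "W v = (if v = r then [r] else (THE p. is_walk T p \<and> hd p = r \<and> last p = v))" for v
  have W: "is_walk T (W v) \<and> hd (W v) = r \<and> last (W v) = v" for v
  proof (cases "v = r")
    case True then show ?thesis by (simp add: W_def walk_single)
  next
    case False then show ?thesis using theI'[OF H[OF False]] by (simp add: W_def)
  qed
  have Wuniq: "\<And>p. v \<noteq> r \<Longrightarrow> is_walk T p \<Longrightarrow> hd p = r \<Longrightarrow> last p = v \<Longrightarrow> p = W v" for v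
    using H W by blast
  have Wne: "W v \<noteq> []" for v using W by (simp add: is_walk_def)
  obtain a c where rac: "distinct [r,a,c]" using ex3 by blast
  have U: "UNIV = {r,a,c}" using univ3[OF rac] .
  have E1: "v \<noteq> r" if "(u,v) \<in> T" for u v
  proof
    assume vr: "v = r"
    have w: "is_walk T (W u @ W a)" using walk_append[of T "W u" "W a"] W that vr by simp
    have h1: "hd (W u @ W a) = r" using W Wne by simp
    have h2: "last (W u @ W a) = a" using W Wne by simp
    have ar: "a \<noteq> r" using rac by auto
    have "W u @ W a = W a" using Wuniq[OF ar w h1 h2] .
    then show False using Wne by (metis append_self_conv2)
  qed
  have E2: "u = u'" if "(u,v) \<in> T" "(u',v) \<in> T" for u u' v
  proof -
    have vr: "v \<noteq> r" using E1 that by blast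
    have w1: "is_walk T (W u @ [v])" using walk_append[of T "W u" "[v]"] W that walk_single by simp
    have w2: "is_walk T (W u' @ [v])" using walk_append[of T "W u'" "[v]"] W that walk_single by simp
    have "W u @ [v] = W v" using Wuniq[OF vr w1] W Wne by simp
    moreover have "W u' @ [v] = W v" using Wuniq[OF vr w2] W Wne by simp
    ultimately have "W u @ [v] = W u' @ [v]" by simp
    then have "W u = W u'" by simp
    then show ?thesis using W by metis
  qed
  have E3: "(v,v) \<notin> T" for v
  proof
    assume vv: "(v,v) \<in> T"
    have vr: "v \<noteq> r" using E1 vv by blast
    have w1: "is_walk T (W v @ [v])" using walk_append[of T "W v" "[v]"] W vv walk_single by simp
    have "W v @ [v] = W v" using Wuniq[OF vr w1] W Wne by simp
    then show False by simp
  qed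
  have E4: "\<exists>u. (u,v) \<in> T" if vr: "v \<noteq> r" for v
  proof -
    let ?p = "W v"
    have "length ?p \<noteq> 1"
    proof
      assume "length ?p = 1"
      then have "hd ?p = last ?p" by (metis One_nat_def Wne diff_Suc_1 hd_conv_nth last_conv_nth)
      then show False using W vr by simp
    qed
    moreover have "length ?p \<noteq> 0" using Wne by simp
    ultimately have l: "length ?p \<ge> 2" by arith
    then have "(?p ! (length ?p - 2), ?p ! Suc (length ?p - 2)) \<in> T"
      using W unfolding is_walk_def by auto
    moreover have "Suc (length ?p - 2) = length ?p - 1" using l by simp
    ultimately show ?thesis using W Wne by (metis last_conv_nth)
  qed
  have E5: "\<exists>v. (r,v) \<in> T"
  proof -
    let ?p = "W a"
    have "length ?p \<noteq> 1"
    proof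
      assume "length ?p = 1"
      then have "hd ?p = last ?p" by (metis One_nat_def Wne diff_Suc_1 hd_conv_nth last_conv_nth)
      then show False using W rac by simp
    qed
    moreover have "length ?p \<noteq> 0" using Wne by simp
    ultimately have l: "length ?p \<ge> 2" by arith
    then have "(?p ! 0, ?p ! 1) \<in> T"
      using W unfolding is_walk_def by auto
    moreover have "?p ! 0 = r" using W Wne by (metis hd_conv_nth)
    ultimately show ?thesis by auto
  qed
  obtain pa where pa: "(pa, a) \<in> T" using E4[of a] rac by auto
  obtain pc where pc: "(pc, c) \<in> T" using E4[of c] rac by auto
  have "pa \<in> {r,a,c}" "pc \<in> {r,a,c}" using U by blast+
  then have pa': "pa = r \<or> pa = c" and pc': "pc = r \<or> pc = a" using E3 pa pc by auto
  have Teq: "T = {(pa,a),(pc,c)}"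
  proof
    show "{(pa,a),(pc,c)} \<subseteq> T" using pa pc by simp
  next
    show "T \<subseteq> {(pa,a),(pc,c)}"
    proof
      fix e assume e: "e \<in> T"
      obtain u v where uv: "e = (u,v)" by force
      have "v \<noteq> r" using E1 e uv by blast
      then have "v = a \<or> v = c" using U by auto
      then show "e \<in> {(pa,a),(pc,c)}"
      proof
        assume "v = a" then have "u = pa" using E2[of u v pa] e uv pa by simp
        then show ?thesis using uv \<open>v = a\<close> by simp
      next
        assume "v = c" then have "u = pc" using E2[of u v pc] e uv pc by simp
        then show ?thesis using uv \<open>v = c\<close> by simp
      qed
    qed
  qed
  have notboth: "\<not> (pa = c \<and> pc = a)"
  proof
    assume h: "pa = c \<and> pc = a"
    obtain v where "(r,v) \<in> T" using E5 by blast
    then have "(r,v) \<in> {(c,a),(a,c)}" using Teq h by simp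
    then show False using rac by auto
  qed
  have "(pa = r \<and> pc = r) \<or> (pa = r \<and> pc = a) \<or> (pa = c \<and> pc = r)" using pa' pc' notboth by blast
  then show ?thesis
  proof (elim disjE conjE)
    assume "pa = r" "pc = r"
    then have "T = {(r,a),(r,c)}" using Teq by simp
    moreover have "distinct [a,r,c]" using rac by auto
    ultimately show ?thesis by blast
  next
    assume "pa = r" "pc = a"
    then have "T = {(r,a),(a,c)}" using Teq by simp
    moreover have "distinct [r,a,c]" using rac by auto
    ultimately show ?thesis by blast
  next
    assume "pa = c" "pc = r"
    then have "T = {(r,c),(c,a)}" using Teq by auto
    moreover have "distinct [r,c,a]" using rac by auto
    ultimately show ?thesis by blast
  qed
qed

lemma dtree_star:
  fixes a b c :: 3 assumes d: "distinct [a,b,c]"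
  shows "dtree {(b,a),(b,c)}"
  unfolding dtree_def
proof (intro exI[of _ b] allI impI)
  fix v assume vb: "v \<noteq> b"
  have U: "UNIV = {a,b,c}" using univ3[OF d] .
  have vac: "v = a \<or> v = c" using vb U by auto
  let ?T = "{(b,a),(b,c)}"
  show "\<exists>!p. is_walk ?T p \<and> hd p = b \<and> last p = v"
  proof
    show "is_walk ?T [b,v] \<and> hd [b,v] = b \<and> last [b,v] = v"
      using vac by (auto simp: is_walk_def less_Suc_eq)
  next
    fix p assume p: "is_walk ?T p \<and> hd p = b \<and> last p = v"
    have pne: "p \<noteq> []" using p by (simp add: is_walk_def)
    have l2: "length p \<le> 2"
    proof (rule ccontr)
      assume "\<not> length p \<le> 2"
      then have "Suc 1 < length p" "Suc 0 < length p" by auto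
      then have "(p!1, p!Suc 1) \<in> ?T" "(p!0, p!Suc 0) \<in> ?T" using p unfolding is_walk_def
        by blast+
      then show False using d by auto
    qed
    have l1: "length p \<noteq> 1"
    proof
      assume "length p = 1"
      then have "hd p = last p" by (metis One_nat_def pne diff_Suc_1 hd_conv_nth last_conv_nth)
      then show False using p vb by simp
    qed
    have "length p \<noteq> 0" using pne by simp
    then have "length p = 2" using l1 l2 by arith
    then obtain x y where "p = [x,y]"
      by (metis (no_types, lifting) One_nat_def Suc_1 length_0_conv length_Suc_conv)
    then show "p = [b,v]" using p by simp
  qed
qed




lemma ax_nth: fixes x :: "real^3" and s :: real shows "(x + axis w s) $ v = (if v = w then x $ v + s else x $ v)"
  by (simp add: axis_def)

lemma marg1_shift: fixes s :: real shows "v \<noteq> w \<Longrightarrow> marg1 Q v (x + axis w s) = marg1 Q v x"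
  by (simp add: marg1_def axis_def)

lemma cond1_shift: fixes s :: real shows "v \<noteq> w \<Longrightarrow> u \<noteq> w \<Longrightarrow> cond1 Q v u (x + axis w s) = cond1 Q v u x"
  by (simp add: cond1_def marg1_def axis_def)

definition pmix :: "(real^3 \<Rightarrow> real) \<Rightarrow> 3 \<Rightarrow> 3 \<Rightarrow> bool" where
  "pmix f a c \<longleftrightarrow> (\<forall>x. f (x + axis a 1 + axis c 1) * f x = f (x + axis a 1) * f (x + axis c 1))"

lemma pmix_indep_a: assumes h: "\<And>x. f (x + axis a 1) = f x" shows "pmix f a c"
  unfolding pmix_def
proof
  fix x
  have "f (x + axis a 1 + axis c 1) = f (x + axis c 1)"
    using h[of "x + axis c 1"] by (simp add: algebra_simps)
  then show "f (x + axis a 1 + axis c 1) * f x = f (x + axis a 1) * f (x + axis c 1)"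
    using h[of x] by simp
qed

lemma pmix_indep_c: assumes h: "\<And>x. f (x + axis c 1) = f x" shows "pmix f a c"
  unfolding pmix_def
proof
  fix x
  have "f (x + axis a 1 + axis c 1) = f (x + axis a 1)"
    using h[of "x + axis a 1"] by (simp add: algebra_simps)
  then show "f (x + axis a 1 + axis c 1) * f x = f (x + axis a 1) * f (x + axis c 1)"
    using h[of x] by simp
qed

lemma pmix_mult: assumes "pmix f a c" "pmix g a c" shows "pmix (\<lambda>x. f x * g x) a c"
  unfolding pmix_def
proof
  fix x
  have 1: "f (x + axis a 1 + axis c 1) * f x = f (x + axis a 1) * f (x + axis c 1)"
    using assms(1) unfolding pmix_def by blast
  have 2: "g (x + axis a 1 + axis c 1) * g x = g (x + axis a 1) * g (x + axis c 1)"
    using assms(2) unfolding pmix_def by blast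
  have "(f (x + axis a 1 + axis c 1) * g (x + axis a 1 + axis c 1)) * (f x * g x)
     = (f (x + axis a 1 + axis c 1) * f x) * (g (x + axis a 1 + axis c 1) * g x)" by (simp add: ac_simps)
  also have "\<dots> = (f (x + axis a 1) * f (x + axis c 1)) * (g (x + axis a 1) * g (x + axis c 1))"
    using 1 2 by simp
  finally show "(f (x + axis a 1 + axis c 1) * g (x + axis a 1 + axis c 1)) * (f x * g x)
     = (f (x + axis a 1) * g (x + axis a 1)) * (f (x + axis c 1) * g (x + axis c 1))" by (simp add: ac_simps)
qed

lemma prod3: fixes a b c :: 3 assumes "distinct [a,b,c]"
  shows "(\<Prod>v\<in>UNIV. f v) = f a * f b * f c"
proof -
  have "card {a,b,c} = card (UNIV::3 set)" using assms by simp
  then have U: "UNIV = {a,b,c}" using card_subset_eq[of "UNIV::3 set" "{a,b,c}"] by simp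
  show ?thesis using assms by (subst U) (simp add: mult.assoc)
qed

lemma factor_form1:
  assumes "distinct [a,b,c]"
  shows "factor {(b,a),(b,c)} Q a = cond1 Q a b"
        "factor {(b,a),(b,c)} Q b = marg1 Q b"
        "factor {(b,a),(b,c)} Q c = cond1 Q c b"
  using assms by (auto simp: factor_def fun_eq_iff)

lemma factor_form2:
  assumes "distinct [a,b,c]"
  shows "factor {(a,b),(b,c)} Q a = marg1 Q a"
        "factor {(a,b),(b,c)} Q b = cond1 Q b a"
        "factor {(a,b),(b,c)} Q c = cond1 Q c b"
  using assms by (auto simp: factor_def fun_eq_iff)

lemma pmix_tree:
  assumes d: "distinct [a,b,c]" and T: "T = {(b,a),(b,c)} \<or> T = {(a,b),(b,c)}"
  shows "pmix (\<lambda>x. \<Prod>v\<in>UNIV. factor T Q v x) a c"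
proof -
  have ne: "a \<noteq> b" "b \<noteq> a" "a \<noteq> c" "c \<noteq> a" "b \<noteq> c" "c \<noteq> b" using d by auto
  have P: "(\<lambda>x. \<Prod>v\<in>UNIV. factor T Q v x) = (\<lambda>x. factor T Q a x * factor T Q b x * factor T Q c x)"
    by (rule ext) (rule prod3[OF d])
  from T show ?thesis
  proof
    assume T1: "T = {(b,a),(b,c)}"
    have "pmix (factor T Q a) a c" using d T1 factor_form1[OF d]
      by (intro pmix_indep_c) (simp add: cond1_shift ne)
    moreover have "pmix (factor T Q b) a c" using d T1 factor_form1[OF d]
      by (intro pmix_indep_a) (simp add: marg1_shift ne)
    moreover have "pmix (factor T Q c) a c" using d T1 factor_form1[OF d]
      by (intro pmix_indep_a) (simp add: cond1_shift ne)
    ultimately show ?thesis unfolding P by (intro pmix_mult)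
  next
    assume T2: "T = {(a,b),(b,c)}"
    have "pmix (factor T Q a) a c" using d T2 factor_form2[OF d]
      by (intro pmix_indep_c) (simp add: marg1_shift ne)
    moreover have "pmix (factor T Q b) a c" using d T2 factor_form2[OF d]
      by (intro pmix_indep_c) (simp add: cond1_shift ne)
    moreover have "pmix (factor T Q c) a c" using d T2 factor_form2[OF d]
      by (intro pmix_indep_a) (simp add: cond1_shift ne)
    ultimately show ?thesis unfolding P by (intro pmix_mult)
  qed
qed

lemma mv_neg: fixes K :: "real^3^3" shows "K *v (- m) = - (K *v m)"
  by (metis add.inverse_neutral diff_0 matrix_vector_mult_0_right matrix_vector_mult_diff_distrib)

lemma quad_mix:
  fixes K :: "real^3^3" and m u w :: "real^3"
  shows "(u + w - m) \<bullet> (K *v (u + w - m)) + (0 - m) \<bullet> (K *v (0 - m))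
       - (u - m) \<bullet> (K *v (u - m)) - (w - m) \<bullet> (K *v (w - m)) = u \<bullet> (K *v w) + w \<bullet> (K *v u)"
  by (simp add: inner_add_left inner_add_right inner_diff_left inner_diff_right
      matrix_vector_right_distrib matrix_vector_mult_diff_distrib mv_neg algebra_simps)

lemma axis_K: fixes K :: "real^3^3" shows "axis a 1 \<bullet> (K *v axis c 1) = K $ a $ c"
  by (simp add: inner_axis' matrix_vector_mult_basis column_def)




lemma sum3: fixes a b c :: 3 assumes "distinct [a,b,c]"
  shows "(\<Sum>v\<in>UNIV. f v) = f a + f b + f c"
proof -
  have "card {a,b,c} = card (UNIV::3 set)" using assms by simp
  then have U: "UNIV = {a,b,c}" using card_subset_eq[of "UNIV::3 set" "{a,b,c}"] by simp
  show ?thesis using assms by (subst U) (simp add: add.assoc)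
qed

lemma det_center:
  fixes K :: "real^3^3"
  assumes d: "distinct [a,b,c]" and z: "K$a$c = 0" "K$c$a = 0"
    and s: "K$b$a = K$a$b" "K$b$c = K$c$b"
  shows "det K = K$a$a*K$b$b*K$c$c - (K$a$b)^2*K$c$c - (K$c$b)^2*K$a$a"
  using exhaust_3[of a] exhaust_3[of b] exhaust_3[of c] d z s
  apply (elim disjE)
  apply (simp_all add: det_3 power2_eq_square)
  done

lemma gdens3_eq: "gdens3 Q x = exp (- (1/2) * ((x - fst Q) \<bullet> (matrix_inv (snd Q) *v (x - fst Q))))
   / sqrt ((2*pi)^3 * det (snd Q))"
  by (simp add: gdens3_def Let_def)

lemma kac_zero:
  assumes d: "distinct [a,b,c]" and T: "T = {(b,a),(b,c)} \<or> T = {(a,b),(b,c)}"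
    and g: "is_gauss3 Q" and f: "factorizes T Q"
  shows "matrix_inv (snd Q) $ a $ c = 0" "matrix_inv (snd Q) $ c $ a = 0"
proof -
  define S where "S = snd Q"
  define K where "K = matrix_inv S"
  define m where "m = fst Q"
  have pd: "pos_def3 S" using g by (simp add: is_gauss3_def S_def)
  have Ks: "transpose K = K" using posdef_inv_sym[OF pd] by (simp add: K_def)
  have dS: "det S \<noteq> 0" using posdef_det[OF pd] by auto
  define C where "C = sqrt ((2*pi)^3 * det S)"
  have C: "C \<noteq> 0" using dS by (simp add: C_def)
  define q where "q x = (x - m) \<bullet> (K *v (x - m))" for x
  have G: "gdens3 Q x = exp (- (1/2) * q x) / C" for x
    by (simp add: gdens3_eq q_def K_def S_def m_def C_def)
  have "pmix (gdens3 Q) a c"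
  proof -
    have "gdens3 Q = (\<lambda>x. \<Prod>v\<in>UNIV. factor T Q v x)" using f by (auto simp: factorizes_def)
    then show ?thesis using pmix_tree[OF d T] by simp
  qed
  then have "gdens3 Q (0 + axis a 1 + axis c 1) * gdens3 Q 0 = gdens3 Q (0 + axis a 1) * gdens3 Q (0 + axis c 1)"
    unfolding pmix_def by blast
  then have "exp (- (1/2) * q (axis a 1 + axis c 1)) * exp (- (1/2) * q 0)
      = exp (- (1/2) * q (axis a 1)) * exp (- (1/2) * q (axis c 1))"
    using C by (simp add: G field_simps)
  then have "exp (- (1/2) * q (axis a 1 + axis c 1) + - (1/2) * q 0)
      = exp (- (1/2) * q (axis a 1) + - (1/2) * q (axis c 1))" by (metis exp_add)
  then have "q (axis a 1 + axis c 1) + q 0 - q (axis a 1) - q (axis c 1) = 0" by simp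
  moreover have "q (axis a 1 + axis c 1) + q 0 - q (axis a 1) - q (axis c 1)
     = axis a 1 \<bullet> (K *v axis c 1) + axis c 1 \<bullet> (K *v axis a 1)"
    unfolding q_def by (rule quad_mix)
  ultimately have "K$a$c + K$c$a = 0" by (simp only: axis_K)
  moreover have "K$c$a = K$a$c"
  proof -
    have "transpose K $ a $ c = K $ a $ c" using Ks by simp
    then show ?thesis by (simp add: transpose_def)
  qed
  ultimately show "matrix_inv (snd Q) $ a $ c = 0" "matrix_inv (snd Q) $ c $ a = 0"
    by (simp_all add: K_def S_def)
qed

definition Lval :: "real^3^3 \<Rightarrow> 3 \<Rightarrow> 3 \<Rightarrow> 3 \<Rightarrow> real" where
  "Lval S a b c = (1/2) * (ln (S$a$a*S$b$b - (S$a$b)^2) + ln (S$c$c*S$b$b - (S$c$b)^2)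
      - ln (S$b$b) - ln (det S))"

lemma quadform: fixes K :: "real^3^3"
  shows "y \<bullet> (K *v y) = (\<Sum>i\<in>UNIV. \<Sum>j\<in>UNIV. y$i * K$i$j * y$j)"
  by (simp add: inner_vec_def matrix_vector_mult_def sum_distrib_left mult.assoc mult.commute mult.left_commute)

lemma trace_prod: fixes K S :: "real^3^3"
  shows "trace (K ** S) = (\<Sum>i\<in>UNIV. \<Sum>j\<in>UNIV. K$i$j * S$j$i)"
  by (simp add: trace_def matrix_matrix_mult_def)

lemma transpose_entry: "transpose A = A \<Longrightarrow> A $ j $ i = A $ i $ j"
  by (metis transpose_def vec_lambda_beta)

lemma lower_bound:
  fixes S :: "real^3^3"
  assumes d: "distinct [a,b,c]" and T: "T = {(b,a),(b,c)} \<or> T = {(a,b),(b,c)}"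
    and g: "is_gauss3 Q" and f: "factorizes T Q"
    and Ss: "transpose S = S" and p1: "S$b$b > 0" and p2: "S$a$a*S$b$b - (S$a$b)^2 > 0"
    and p3: "S$c$c*S$b$b - (S$c$b)^2 > 0" and p4: "det S > 0"
  shows "KL3 (0, S) Q \<ge> Lval S a b c"
proof -
  define K where "K = matrix_inv (snd Q)"
  define m where "m = fst Q"
  have pd: "pos_def3 (snd Q)" using g by (simp add: is_gauss3_def)
  have z: "K$a$c = 0" "K$c$a = 0" using kac_zero[OF d T g f] by (simp_all add: K_def)
  have Kt: "transpose K = K" using posdef_inv_sym[OF pd] by (simp add: K_def)
  have ks: "K$b$a = K$a$b" "K$b$c = K$c$b" using transpose_entry[OF Kt] by blast+
  have ss: "S$b$a = S$a$b" "S$b$c = S$c$b" "S$c$a = S$a$c" using transpose_entry[OF Ss] by blast+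
  have kaa: "K$a$a > 0"
    using posdef_inv_pos[OF pd, of "axis a 1"] by (simp add: axis_K K_def axis_eq_0_iff)
  have kcc: "K$c$c > 0"
    using posdef_inv_pos[OF pd, of "axis c 1"] by (simp add: axis_K K_def axis_eq_0_iff)
  define y :: "real^3" where "y = (\<chi> i. if i = b then 1 else if i = a then - (K$a$b/K$a$a) else - (K$c$b/K$c$c))"
  have yb: "y $ b = 1" "y $ a = - (K$a$b/K$a$a)" "y $ c = - (K$c$b/K$c$c)" using d by (auto simp: y_def)
  have "y \<noteq> 0" using yb by (metis vec_lambda_beta zero_index zero_neq_one)
  then have ypos: "y \<bullet> (K *v y) > 0" using posdef_inv_pos[OF pd] by (simp add: K_def)
  have "y \<bullet> (K *v y) = K$b$b - (K$a$b)^2/K$a$a - (K$c$b)^2/K$c$c"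
    unfolding quadform sum3[OF d] yb using z ks kaa kcc
    by (simp add: field_simps power2_eq_square)
  then have Dpos: "K$a$a*K$b$b*K$c$c - (K$a$b)^2*K$c$c - (K$c$b)^2*K$a$a > 0"
  proof -
    assume h: "y \<bullet> (K *v y) = K$b$b - (K$a$b)^2/K$a$a - (K$c$b)^2/K$c$c"
    have "K$a$a*K$b$b*K$c$c - (K$a$b)^2*K$c$c - (K$c$b)^2*K$a$a = (K$a$a*K$c$c) * (y \<bullet> (K *v y))"
      using kaa kcc h by (simp add: field_simps power2_eq_square)
    then show ?thesis using kaa kcc ypos by simp
  qed
  have detK: "det K = K$a$a*K$b$b*K$c$c - (K$a$b)^2*K$c$c - (K$c$b)^2*K$a$a"
    using det_center[OF d z ks] .
  have detQ: "det (snd Q) = 1 / det K" using posdef_det[OF pd] Dpos detK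
    by (simp add: K_def field_simps)
  have tr: "trace (K ** S) = K$a$a*S$a$a + K$b$b*S$b$b + K$c$c*S$c$c + 2*K$a$b*S$a$b + 2*K$c$b*S$c$b"
    unfolding trace_prod sum3[OF d] using z ks ss by simp
  have mt: "(m - 0) \<bullet> (K *v (m - 0)) \<ge> 0" using posdef_inv_nonneg[OF pd] by (simp add: K_def)
  have KL: "KL3 (0, S) Q = (1/2) * (trace (K ** S) + (m - 0) \<bullet> (K *v (m - 0)) - 3
      + ln (det (snd Q) / det S))"
    by (simp add: KL3_def K_def m_def)
  have lnq: "ln (det (snd Q) / det S) = - ln (det K) - ln (det S)"
  proof -
    have dk: "det K > 0" using Dpos detK by simp
    have "det (snd Q) / det S = inverse (det K * det S)" using detQ by (simp add: field_simps)
    then show ?thesis using dk p4 by (simp add: ln_inverse ln_mult)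
  qed
  note core = lower_core[OF kaa kcc Dpos p1 p2 p3]
  show ?thesis unfolding KL lnq Lval_def tr detK
    apply (rule mult_left_mono)
    using core mt apply linarith
    by simp
qed




definition mkS :: "3 \<Rightarrow> 3 \<Rightarrow> 3 \<Rightarrow> real \<Rightarrow> real \<Rightarrow> real \<Rightarrow> real \<Rightarrow> real \<Rightarrow> real^3^3" where
  "mkS a b c s ba bc va vc = (\<chi> i j. if i = b \<and> j = b then s
     else if (i = a \<and> j = b) \<or> (i = b \<and> j = a) then ba * s
     else if (i = c \<and> j = b) \<or> (i = b \<and> j = c) then bc * s
     else if i = a \<and> j = a then ba^2 * s + va
     else if i = c \<and> j = c then bc^2 * s + vc
     else ba * bc * s)"

definition mkK :: "3 \<Rightarrow> 3 \<Rightarrow> 3 \<Rightarrow> real \<Rightarrow> real \<Rightarrow> real \<Rightarrow> real \<Rightarrow> real \<Rightarrow> real^3^3" where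
  "mkK a b c s ba bc va vc = (\<chi> i j. if i = b \<and> j = b then 1/s + ba^2/va + bc^2/vc
     else if (i = a \<and> j = b) \<or> (i = b \<and> j = a) then -ba/va
     else if (i = c \<and> j = b) \<or> (i = b \<and> j = c) then -bc/vc
     else if i = a \<and> j = a then 1/va
     else if i = c \<and> j = c then 1/vc
     else 0)"

lemma mkS_e:
  assumes "distinct [a,b,c]"
  shows "mkS a b c s ba bc va vc $ b $ b = s"
    "mkS a b c s ba bc va vc $ a $ b = ba * s" "mkS a b c s ba bc va vc $ b $ a = ba * s"
    "mkS a b c s ba bc va vc $ c $ b = bc * s" "mkS a b c s ba bc va vc $ b $ c = bc * s"
    "mkS a b c s ba bc va vc $ a $ a = ba^2 * s + va"
    "mkS a b c s ba bc va vc $ c $ c = bc^2 * s + vc"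
    "mkS a b c s ba bc va vc $ a $ c = ba * bc * s" "mkS a b c s ba bc va vc $ c $ a = ba * bc * s"
  using assms by (auto simp: mkS_def)

lemma mkK_e:
  assumes "distinct [a,b,c]"
  shows "mkK a b c s ba bc va vc $ b $ b = 1/s + ba^2/va + bc^2/vc"
    "mkK a b c s ba bc va vc $ a $ b = -ba/va" "mkK a b c s ba bc va vc $ b $ a = -ba/va"
    "mkK a b c s ba bc va vc $ c $ b = -bc/vc" "mkK a b c s ba bc va vc $ b $ c = -bc/vc"
    "mkK a b c s ba bc va vc $ a $ a = 1/va"
    "mkK a b c s ba bc va vc $ c $ c = 1/vc"
    "mkK a b c s ba bc va vc $ a $ c = 0" "mkK a b c s ba bc va vc $ c $ a = 0"
  using assms by (auto simp: mkK_def)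

lemma all3: fixes a b c :: 3 assumes "distinct [a,b,c]"
  shows "(\<forall>i. P i) \<longleftrightarrow> P a \<and> P b \<and> P c"
proof -
  have "card {a,b,c} = card (UNIV::3 set)" using assms by simp
  then have U: "UNIV = {a,b,c}" using card_subset_eq[of "UNIV::3 set" "{a,b,c}"] by simp
  show ?thesis by (metis U UNIV_I insertE empty_iff)
qed

lemma mkSK:
  assumes d: "distinct [a,b,c]" and s: "s > 0" and va: "va > 0" and vc: "vc > 0"
  shows "mkS a b c s ba bc va vc ** mkK a b c s ba bc va vc = mat 1"
proof -
  have ne: "a \<noteq> b" "b \<noteq> a" "a \<noteq> c" "c \<noteq> a" "b \<noteq> c" "c \<noteq> b" using d by auto
  show ?thesis
    unfolding vec_eq_iff all3[OF d] matrix_matrix_mult_def sum3[OF d]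
    using s va vc ne by (simp add: mkS_e[OF d] mkK_e[OF d] mat_def field_simps power2_eq_square)
qed

lemma mkS_inv:
  assumes d: "distinct [a,b,c]" and s: "s > 0" and va: "va > 0" and vc: "vc > 0"
  shows "matrix_inv (mkS a b c s ba bc va vc) = mkK a b c s ba bc va vc"
  using inv_unique[OF mkSK[OF assms]] .

lemma mkS_quad:
  assumes d: "distinct [a,b,c]"
  shows "x \<bullet> (mkS a b c s ba bc va vc *v x)
     = s * (x$b + ba * x$a + bc * x$c)^2 + va * (x$a)^2 + vc * (x$c)^2"
  unfolding quadform sum3[OF d] by (simp add: mkS_e[OF d] power2_eq_square algebra_simps)

lemma mkK_quad:
  assumes d: "distinct [a,b,c]" and s: "s > 0" and va: "va > 0" and vc: "vc > 0"
  shows "x \<bullet> (mkK a b c s ba bc va vc *v x)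
     = (x$b)^2/s + (x$a - ba * x$b)^2/va + (x$c - bc * x$b)^2/vc"
  unfolding quadform sum3[OF d] using s va vc
  by (simp add: mkK_e[OF d] power2_eq_square field_simps)

lemma mkS_posdef:
  assumes d: "distinct [a,b,c]" and s: "s > 0" and va: "va > 0" and vc: "vc > 0"
  shows "pos_def3 (mkS a b c s ba bc va vc)"
  unfolding pos_def3_def
proof (intro conjI allI impI)
  show "transpose (mkS a b c s ba bc va vc) = mkS a b c s ba bc va vc"
    unfolding vec_eq_iff all3[OF d] transpose_def by (simp add: mkS_e[OF d])
next
  fix x :: "real^3" assume x: "x \<noteq> 0"
  have "x$a \<noteq> 0 \<or> x$b \<noteq> 0 \<or> x$c \<noteq> 0"
    using x unfolding vec_eq_iff all3[OF d] by simp
  then have "s * (x$b + ba * x$a + bc * x$c)^2 + va * (x$a)^2 + vc * (x$c)^2 > 0"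
  proof (elim disjE)
    assume "x$a \<noteq> 0" then have "va * (x$a)^2 > 0" using va by simp
    moreover have "s * (x$b + ba * x$a + bc * x$c)^2 \<ge> 0" "vc * (x$c)^2 \<ge> 0" using s vc by simp_all
    ultimately show ?thesis by linarith
  next
    assume "x$c \<noteq> 0" then have "vc * (x$c)^2 > 0" using vc by simp
    moreover have "s * (x$b + ba * x$a + bc * x$c)^2 \<ge> 0" "va * (x$a)^2 \<ge> 0" using s va by simp_all
    ultimately show ?thesis by linarith
  next
    assume xb: "x$b \<noteq> 0"
    show ?thesis
    proof (cases "x$a = 0 \<and> x$c = 0")
      case True then have "s * (x$b + ba * x$a + bc * x$c)^2 > 0" using xb s by simp
      moreover have "vc * (x$c)^2 \<ge> 0" "va * (x$a)^2 \<ge> 0" using va vc by simp_all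
      ultimately show ?thesis by linarith
    next
      case False
      then have "va * (x$a)^2 > 0 \<or> vc * (x$c)^2 > 0" using va vc by auto
      moreover have "s * (x$b + ba * x$a + bc * x$c)^2 \<ge> 0" "vc * (x$c)^2 \<ge> 0" "va * (x$a)^2 \<ge> 0"
        using s va vc by simp_all
      ultimately show ?thesis by linarith
    qed
  qed
  then show "x \<bullet> (mkS a b c s ba bc va vc *v x) > 0" using mkS_quad[OF d] by simp
qed

lemma mkK_det:
  assumes d: "distinct [a,b,c]" and s: "s > 0" and va: "va > 0" and vc: "vc > 0"
  shows "det (mkK a b c s ba bc va vc) = 1 / (s * va * vc)"
proof -
  have "det (mkK a b c s ba bc va vc) =
    (1/va) * (1/s + ba^2/va + bc^2/vc) * (1/vc) - (-ba/va)^2 * (1/vc) - (-bc/vc)^2 * (1/va)"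
    using det_center[OF d, of "mkK a b c s ba bc va vc"] by (simp add: mkK_e[OF d])
  also have "\<dots> = 1 / (s * va * vc)" using s va vc by (simp add: field_simps power2_eq_square)
  finally show ?thesis .
qed

lemma mkS_det:
  assumes d: "distinct [a,b,c]" and s: "s > 0" and va: "va > 0" and vc: "vc > 0"
  shows "det (mkS a b c s ba bc va vc) = s * va * vc"
proof -
  have "det (mkS a b c s ba bc va vc) * det (mkK a b c s ba bc va vc) = 1"
    using mkSK[OF assms] by (metis det_I det_mul)
  then show ?thesis using mkK_det[OF assms] s va vc by (simp add: field_simps)
qed




lemma gd1: "gdens1 0 s u = exp (- (u^2) / (2 * s)) / sqrt (2 * pi * s)"
  by (simp add: gdens1_def)

lemma gd2a:
  assumes s: "s > 0" and v: "v > 0"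
  shows "gdens2 0 0 s (ba * s) (ba^2 * s + v) u w = exp (- ((u^2/s + (w - ba * u)^2/v) / 2)) / (2 * pi * sqrt (s * v))"
proof -
  have d: "s * (ba^2 * s + v) - (ba * s)^2 = s * v" by (simp add: algebra_simps power2_eq_square)
  have q: "((ba^2 * s + v) * (u - 0)^2 - 2 * (ba * s) * (u - 0) * (w - 0) + s * (w - 0)^2) / (s * v)
       = u^2/s + (w - ba * u)^2/v" using s v by (simp add: field_simps power2_eq_square)
  show ?thesis unfolding gdens2_def Let_def d q by (simp only: minus_divide_left)
qed

lemma gd2b:
  assumes s: "s > 0" and v: "v > 0"
  shows "gdens2 0 0 (ba^2 * s + v) (ba * s) s w u = exp (- ((u^2/s + (w - ba * u)^2/v) / 2)) / (2 * pi * sqrt (s * v))"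
proof -
  have d: "(ba^2 * s + v) * s - (ba * s)^2 = s * v" by (simp add: algebra_simps power2_eq_square)
  have q: "(s * (w - 0)^2 - 2 * (ba * s) * (w - 0) * (u - 0) + (ba^2 * s + v) * (u - 0)^2) / (s * v)
       = u^2/s + (w - ba * u)^2/v" using s v by (simp add: field_simps power2_eq_square)
  show ?thesis unfolding gdens2_def Let_def d q by (simp only: minus_divide_left)
qed

lemma sqrt_id:
  assumes s: "s > 0" and va: "va > 0" and vc: "vc > 0"
  shows "sqrt ((2*pi)^3 * (s * va * vc)) * sqrt (2 * pi * s) = (2 * pi * sqrt (s * va)) * (2 * pi * sqrt (s * vc))"
proof -
  have "sqrt ((2*pi)^3 * (s * va * vc)) * sqrt (2 * pi * s) = sqrt (((2*pi)^2)^2 * (s^2 * (va * vc)))"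
    by (simp add: real_sqrt_mult[symmetric] power2_eq_square algebra_simps eval_nat_numeral)
  also have "\<dots> = (2*pi)^2 * sqrt (s^2 * (va * vc))" by (simp only: real_sqrt_mult real_sqrt_abs abs_power2 abs_of_nonneg)
  also have "\<dots> = (2 * pi * sqrt (s * va)) * (2 * pi * sqrt (s * vc))"
    by (simp add: real_sqrt_mult[symmetric] power2_eq_square algebra_simps)
  finally show ?thesis .
qed

lemma frac_id:
  fixes A B C P p r1 r2 :: real
  assumes "C > 0" "P > 0" "p > 0" "r1 > 0" "r2 > 0" "P * p = (2 * pi * r1) * (2 * pi * r2)"
  shows "A * B / C / P = (A / (2 * pi * r1)) * (B / (2 * pi * r2)) / (C / p)"
proof -
  have "A * B / C / P = A * B * p / (C * (P * p))" using assms by (simp add: field_simps)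
  also have "\<dots> = A * B * p / (C * ((2 * pi * r1) * (2 * pi * r2)))" using assms(6) by simp
  also have "\<dots> = (A / (2 * pi * r1)) * (B / (2 * pi * r2)) / (C / p)" using assms by (simp add: field_simps)
  finally show ?thesis .
qed

lemma core_fact:
  assumes s: "s > 0" and va: "va > 0" and vc: "vc > 0"
  shows "exp (- (1/2) * (xb^2/s + (xa - ba * xb)^2/va + (xc - bc * xb)^2/vc)) / sqrt ((2*pi)^3 * (s * va * vc))
    = (exp (- ((xb^2/s + (xa - ba * xb)^2/va) / 2)) / (2 * pi * sqrt (s * va)))
    * (exp (- ((xb^2/s + (xc - bc * xb)^2/vc) / 2)) / (2 * pi * sqrt (s * vc)))
    / (exp (- (xb^2) / (2 * s)) / sqrt (2 * pi * s))"
proof -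
  have ex: "- (1/2) * (xb^2/s + (xa - ba * xb)^2/va + (xc - bc * xb)^2/vc)
      = - ((xb^2/s + (xa - ba * xb)^2/va) / 2) + - ((xb^2/s + (xc - bc * xb)^2/vc) / 2) - - (xb^2) / (2 * s)"
    by (simp add: field_simps)
  have e: "exp (- (1/2) * (xb^2/s + (xa - ba * xb)^2/va + (xc - bc * xb)^2/vc))
     = exp (- ((xb^2/s + (xa - ba * xb)^2/va) / 2)) * exp (- ((xb^2/s + (xc - bc * xb)^2/vc) / 2))
       / exp (- (xb^2) / (2 * s))"
    unfolding ex exp_diff exp_add ..
  have p1: "sqrt ((2*pi)^3 * (s * va * vc)) > 0" using s va vc by simp
  have p2: "sqrt (2 * pi * s) > 0" using s by simp
  have p3: "sqrt (s * va) > 0" "sqrt (s * vc) > 0" using s va vc by simp_all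
  show ?thesis unfolding e
    by (rule frac_id[OF exp_gt_zero p1 p2 p3 sqrt_id[OF s va vc]])
qed

lemma mk_factorizes:
  assumes d: "distinct [a,b,c]" and T: "T = {(b,a),(b,c)} \<or> T = {(a,b),(b,c)}"
    and s: "s > 0" and va: "va > 0" and vc: "vc > 0"
  shows "factorizes T (0, mkS a b c s ba bc va vc)"
  unfolding factorizes_def
proof
  fix x :: "real^3"
  let ?Q = "(0::real^3, mkS a b c s ba bc va vc)"
  have G: "gdens3 ?Q x = exp (- (1/2) * ((x$b)^2/s + (x$a - ba * x$b)^2/va + (x$c - bc * x$b)^2/vc))
      / sqrt ((2*pi)^3 * (s * va * vc))"
    unfolding gdens3_eq using mkS_inv[OF d s va vc] mkK_quad[OF d s va vc] mkS_det[OF d s va vc] by simp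
  have mb: "marg1 ?Q b x = exp (- ((x$b)^2) / (2 * s)) / sqrt (2 * pi * s)"
    by (simp add: marg1_def mkS_e[OF d] gd1)
  have mbp: "marg1 ?Q b x > 0" unfolding mb using s by simp
  have vpos: "ba^2 * s + va > 0" using va s by (simp add: add_nonneg_pos)
  have ma: "marg1 ?Q a x > 0" using vpos by (simp add: marg1_def mkS_e[OF d] gdens1_def)
  have cab: "cond1 ?Q a b x = exp (- (((x$b)^2/s + (x$a - ba * x$b)^2/va) / 2)) / (2 * pi * sqrt (s * va)) / marg1 ?Q b x"
    unfolding cond1_def by (simp add: mkS_e[OF d] gd2a[OF s va])
  have ccb: "cond1 ?Q c b x = exp (- (((x$b)^2/s + (x$c - bc * x$b)^2/vc) / 2)) / (2 * pi * sqrt (s * vc)) / marg1 ?Q b x"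
    unfolding cond1_def by (simp add: mkS_e[OF d] gd2a[OF s vc])
  have cba: "cond1 ?Q b a x = exp (- (((x$b)^2/s + (x$a - ba * x$b)^2/va) / 2)) / (2 * pi * sqrt (s * va)) / marg1 ?Q a x"
    unfolding cond1_def by (simp add: mkS_e[OF d] gd2b[OF s va])
  have core: "gdens3 ?Q x = exp (- (((x$b)^2/s + (x$a - ba * x$b)^2/va) / 2)) / (2 * pi * sqrt (s * va))
     * (exp (- (((x$b)^2/s + (x$c - bc * x$b)^2/vc) / 2)) / (2 * pi * sqrt (s * vc)))
     / marg1 ?Q b x"
    unfolding G mb by (rule core_fact[OF s va vc])
  from T show "gdens3 ?Q x = (\<Prod>v\<in>UNIV. factor T ?Q v x)"
  proof
    assume T1: "T = {(b,a),(b,c)}"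
    show ?thesis unfolding prod3[OF d] T1 factor_form1[OF d] cab ccb core using mbp
      by (simp add: divide_simps)
  next
    assume T2: "T = {(a,b),(b,c)}"
    show ?thesis unfolding prod3[OF d] T2 factor_form2[OF d] cba ccb core using mbp ma
      by (simp add: divide_simps)
  qed
qed




lemma KL_tree_val:
  fixes S :: "real^3^3"
  assumes d: "distinct [a,b,c]" and T: "T = {(b,a),(b,c)} \<or> T = {(a,b),(b,c)}"
    and Ss: "transpose S = S" and p1: "S$b$b > 0" and p2: "S$a$a * S$b$b - (S$a$b)^2 > 0"
    and p3: "S$c$c * S$b$b - (S$c$b)^2 > 0" and p4: "det S > 0"
  shows "KL_tree (0, S) T = Lval S a b c"
proof -
  define s where "s = S$b$b"
  define ba where "ba = S$a$b / s"
  define bc where "bc = S$c$b / s"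
  define va where "va = S$a$a - (S$a$b)^2 / s"
  define vc where "vc = S$c$c - (S$c$b)^2 / s"
  have s: "s > 0" using p1 by (simp add: s_def)
  have va: "va > 0" using p2 s by (simp add: va_def s_def field_simps)
  have vc: "vc > 0" using p3 s by (simp add: vc_def s_def field_simps)
  have ss: "S$b$a = S$a$b" "S$b$c = S$c$b" "S$c$a = S$a$c" using transpose_entry[OF Ss] by blast+
  have e: "S$b$b = s" "S$a$b = ba * s" "S$c$b = bc * s" "S$a$a = ba^2 * s + va" "S$c$c = bc^2 * s + vc"
    using s by (simp_all add: s_def ba_def bc_def va_def vc_def field_simps power2_eq_square)
  define Qs where "Qs = (0::real^3, mkS a b c s ba bc va vc)"
  have gQ: "is_gauss3 Qs" using mkS_posdef[OF d s va vc] by (simp add: Qs_def is_gauss3_def)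
  have fQ: "factorizes T Qs" using mk_factorizes[OF d T s va vc] by (simp add: Qs_def)
  have tr: "trace (mkK a b c s ba bc va vc ** S) = 3"
    unfolding trace_prod sum3[OF d] using s va vc
    by (simp add: mkK_e[OF d] ss e field_simps power2_eq_square)
  have KLQ: "KL3 (0, S) Qs = Lval S a b c"
  proof -
    have "KL3 (0, S) Qs = (1/2) * (3 - 3 + ln ((s * va * vc) / det S))"
      by (simp add: KL3_def Qs_def mkS_inv[OF d s va vc] tr mkS_det[OF d s va vc])
    also have "\<dots> = (1/2) * (ln s + ln va + ln vc - ln (det S))"
      using s va vc p4 by (simp add: ln_div ln_mult)
    also have "\<dots> = Lval S a b c"
    proof -
      have 1: "S$a$a * S$b$b - (S$a$b)^2 = s * va" using s by (simp add: e field_simps power2_eq_square)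
      have 2: "S$c$c * S$b$b - (S$c$b)^2 = s * vc" using s by (simp add: e field_simps power2_eq_square)
      show ?thesis unfolding Lval_def 1 2 using s va vc by (simp add: ln_mult e(1))
    qed
    finally show ?thesis .
  qed
  define A where "A = {Q. is_gauss3 Q \<and> factorizes T Q}"
  have QA: "Qs \<in> A" using gQ fQ by (simp add: A_def)
  have lb: "\<And>Q. Q \<in> A \<Longrightarrow> KL3 (0, S) Q \<ge> Lval S a b c"
    using lower_bound[OF d T _ _ Ss p1 p2 p3 p4] by (auto simp: A_def)
  have "(INF Q \<in> A. KL3 (0, S) Q) \<ge> Lval S a b c"
    using QA lb by (intro cINF_greatest) auto
  moreover have "(INF Q \<in> A. KL3 (0, S) Q) \<le> Lval S a b c"
  proof -
    have "bdd_below ((\<lambda>Q. KL3 (0, S) Q) ` A)" using lb by (intro bdd_belowI2) 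
    then have "(INF Q \<in> A. KL3 (0, S) Q) \<le> KL3 (0, S) Qs" using QA by (rule cINF_lower)
    then show ?thesis using KLQ by simp
  qed
  ultimately show ?thesis unfolding KL_tree_def A_def by simp
qed




definition LL :: "real^3 \<Rightarrow> 3 \<Rightarrow> 3 \<Rightarrow> 3 \<Rightarrow> real" where
  "LL v a b c = (1/2) * (ln ((v$a)^2 + (v$b)^2 + 1) + ln ((v$c)^2 + (v$b)^2 + 1) - ln ((v$b)^2 + 1)
     - ln (1 + (v$1)^2 + (v$2)^2 + (v$3)^2))"

lemma latent_e: "snd (latent_model v) $ i $ j = v$i * v$j + (if i = j then 1 else 0)"
  by (simp add: latent_model_def)

lemma latent_det: "det (snd (latent_model v)) = 1 + (v$1)^2 + (v$2)^2 + (v$3)^2"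
  unfolding det_3 latent_e by (simp add: power2_eq_square algebra_simps)

lemma latent_KL_form:
  assumes d: "distinct [a,b,c]" and T: "T = {(b,a),(b,c)} \<or> T = {(a,b),(b,c)}"
  shows "KL_tree (latent_model v) T = LL v a b c"
proof -
  define S where "S = snd (latent_model v)"
  have L: "latent_model v = (0, S)" by (simp add: S_def latent_model_def)
  have ne: "a \<noteq> b" "b \<noteq> a" "a \<noteq> c" "c \<noteq> a" "b \<noteq> c" "c \<noteq> b" using d by auto
  have Ss: "transpose S = S" by (simp add: S_def vec_eq_iff transpose_def latent_e mult.commute)
  have p1: "S$b$b > 0" by (simp add: S_def latent_e add_nonneg_pos)
  have e2: "S$a$a * S$b$b - (S$a$b)^2 = (v$a)^2 + (v$b)^2 + 1"
    using ne by (simp add: S_def latent_e power2_eq_square algebra_simps)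
  have e3: "S$c$c * S$b$b - (S$c$b)^2 = (v$c)^2 + (v$b)^2 + 1"
    using ne by (simp add: S_def latent_e power2_eq_square algebra_simps)
  have p2: "S$a$a * S$b$b - (S$a$b)^2 > 0" unfolding e2 by (simp add: add_nonneg_pos)
  have p3: "S$c$c * S$b$b - (S$c$b)^2 > 0" unfolding e3 by (simp add: add_nonneg_pos)
  have dS: "det S = 1 + (v$1)^2 + (v$2)^2 + (v$3)^2" by (simp add: S_def latent_det)
  have p4: "det S > 0" unfolding dS by (simp add: add_pos_nonneg)
  have "KL_tree (latent_model v) T = Lval S a b c"
    unfolding L by (rule KL_tree_val[OF d T Ss p1 p2 p3 p4])
  also have "\<dots> = LL v a b c"
    unfolding Lval_def LL_def e2 e3 dS by (simp add: S_def latent_e power2_eq_square)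
  finally show ?thesis .
qed

lemma latent_KL:
  assumes "dtree T"
  shows "\<exists>a b c. distinct [a,b,c] \<and> (\<forall>v. KL_tree (latent_model v) T = LL v a b c)"
proof -
  obtain a b c where d: "distinct [a,b,c]" and T: "T = {(b,a),(b,c)} \<or> T = {(a,b),(b,c)}"
    using dtree_shape[OF assms] by blast
  then show ?thesis using latent_KL_form by blast
qed

definition Aval :: "real \<Rightarrow> real" where
  "Aval t = (1/2) * (ln (t^2 + 2) + ln (t^2 + 2) - ln (t^2 + 1) - ln (3 + t^2))"
definition Bval :: "real \<Rightarrow> real" where
  "Bval t = (1/2) * (ln (t^2 + 2) + ln 3 - ln 2 - ln (3 + t^2))"

lemma LL1:
  assumes d: "distinct [a,b,c]"
  shows "LL (vector [t,1,1]) a b c = (if b = 1 then Aval t else Bval t)"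
  using exhaust_3[of a] exhaust_3[of b] exhaust_3[of c] d
  apply (elim disjE)
  apply (simp_all add: LL_def Aval_def Bval_def add.commute add.left_commute)
  done

lemma LL2:
  assumes d: "distinct [a,b,c]"
  shows "LL (vector [1,t,1]) a b c = (if b = 2 then Aval t else Bval t)"
  using exhaust_3[of a] exhaust_3[of b] exhaust_3[of c] d
  apply (elim disjE)
  apply (simp_all add: LL_def Aval_def Bval_def add.commute add.left_commute)
  done




lemma gap:
  fixes e :: real assumes e: "0 < e" "e < 1"
  shows "Bval (1+e) - Aval (1+e) > e / 100"
proof -
  define t where "t = 1 + e"
  have t: "t > 1" "t < 2" using e by (simp_all add: t_def)
  define x where "x = (t^2 - 1) / (2 * (t^2 + 2))"
  have "1 < t * t" using t by (intro less_1_mult) auto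
  moreover have "t * t < 2 * 2" using t by (intro mult_strict_mono) auto
  ultimately have t2: "t^2 > 1" "t^2 < 4" by (simp_all add: power2_eq_square)
  have xl: "x \<ge> e / 6"
  proof -
    have "t^2 - 1 \<ge> 2 * e" using e by (simp add: t_def power2_eq_square algebra_simps)
    moreover have "2 * (t^2 + 2) \<le> 12" using t2 by simp
    moreover have "2 * (t^2 + 2) > 0" by (simp add: add_nonneg_pos)
    ultimately have "(t^2 - 1) / (2 * (t^2 + 2)) \<ge> (2 * e) / 12"
      using e by (intro frac_le) auto
    then show ?thesis by (simp add: x_def)
  qed
  have xu: "x \<le> 1/2" using t2 by (simp add: x_def field_simps)
  have x0: "x \<ge> 0" using xl e by simp
  have r: "3 * (t^2 + 1) / (2 * (t^2 + 2)) = 1 + x" using t2 by (simp add: x_def field_simps)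
  have q1: "t^2 + 1 > 0" "t^2 + 2 > 0" using t2 by simp_all
  have "ln (3 * (t^2 + 1) / (2 * (t^2 + 2))) = ln (3 * (t^2 + 1)) - ln (2 * (t^2 + 2))"
    using q1 by (simp add: ln_div)
  also have "\<dots> = ln 3 + ln (t^2 + 1) - (ln 2 + ln (t^2 + 2))"
    using q1 ln_mult[of 3 "t^2 + 1"] ln_mult[of 2 "t^2 + 2"] by simp
  finally have "ln 3 + ln (t^2 + 1) - ln 2 - ln (t^2 + 2) = ln (3 * (t^2 + 1) / (2 * (t^2 + 2)))"
    by simp
  also have "\<dots> = ln (1 + x)" using r by simp
  also have "\<dots> \<ge> x - x^2" using ln_one_plus_pos_lower_bound[of x] x0 xu by simp
  finally have L: "ln 3 + ln (t^2 + 1) - ln 2 - ln (t^2 + 2) \<ge> x - x^2" .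
  have "x * x \<le> x * (1/2)" using x0 xu by (intro mult_left_mono) auto
  then have "x - x^2 \<ge> x / 2" by (simp add: power2_eq_square)
  then have "ln 3 + ln (t^2 + 1) - ln 2 - ln (t^2 + 2) \<ge> e / 12" using L xl by linarith
  moreover have "Bval t - Aval t = (1/2) * (ln 3 + ln (t^2 + 1) - ln 2 - ln (t^2 + 2))"
    by (simp add: Aval_def Bval_def algebra_simps)
  ultimately show ?thesis using e by (simp add: t_def)
qed

lemma R1_eq: "R1 e = latent_model (vector [1+e, 1, 1])" by (simp add: R1_def)
lemma R2_eq: "R2 e = latent_model (vector [1, 1+e, 1])" by (simp add: R2_def)

lemma INF_le_tree:
  assumes "dtree T0"
  shows "(INF T \<in> {T. dtree T}. KL_tree R T) \<le> KL_tree R T0"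
proof -
  have "finite {T :: (3 \<times> 3) set. dtree T}" by simp
  then have "bdd_below ((\<lambda>T. KL_tree R T) ` {T. dtree T})" by (intro bdd_below_finite) simp
  then show ?thesis using assms by (intro cINF_lower) auto
qed

theorem lemma6:
  shows "\<exists>\<epsilon>0 > (0::real). \<forall>\<epsilon>. 0 < \<epsilon> \<and> \<epsilon> < \<epsilon>0 \<longrightarrow>
    (\<forall>Rs Ro That. {Rs, Ro} = {R1 \<epsilon>, R2 \<epsilon>} \<and> Rs \<noteq> Ro \<and> dtree That \<and>
        KL_tree Rs That \<le> (INF T \<in> {T. dtree T}. KL_tree Rs T) + \<epsilon> / 100
      \<longrightarrow> KL_tree Rs That < KL_tree Ro That)"
proof (intro exI[of _ 1] conjI allI impI)
  fix e :: real and Rs Ro That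
  assume e: "0 < e \<and> e < 1"
  assume H: "{Rs, Ro} = {R1 e, R2 e} \<and> Rs \<noteq> Ro \<and> dtree That \<and>
        KL_tree Rs That \<le> (INF T \<in> {T. dtree T}. KL_tree Rs T) + e / 100"
  have g: "Bval (1+e) - Aval (1+e) > e / 100" using gap e by blast
  have cases: "(Rs = R1 e \<and> Ro = R2 e) \<or> (Rs = R2 e \<and> Ro = R1 e)"
    using H by (metis doubleton_eq_iff)
  obtain a b c where d: "distinct [a,b,c]" and KT: "\<And>v. KL_tree (latent_model v) That = LL v a b c"
    using latent_KL[of That] H by blast
  have K1: "KL_tree (R1 e) That = (if b = 1 then Aval (1+e) else Bval (1+e))"
    unfolding R1_eq KT LL1[OF d] ..
  have K2: "KL_tree (R2 e) That = (if b = 2 then Aval (1+e) else Bval (1+e))"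
    unfolding R2_eq KT LL2[OF d] ..
  have d1: "distinct [2::3, 1, 3]" and d2: "distinct [1::3, 2, 3]" by simp_all
  have KA1: "KL_tree (R1 e) {(1,2),(1,3)} = Aval (1+e)"
    unfolding R1_eq latent_KL_form[OF d1 disjI1[OF refl]] LL1[OF d1] by simp
  have KA2: "KL_tree (R2 e) {(2,1),(2,3)} = Aval (1+e)"
    unfolding R2_eq latent_KL_form[OF d2 disjI1[OF refl]] LL2[OF d2] by simp
  from cases show "KL_tree Rs That < KL_tree Ro That"
  proof
    assume r: "Rs = R1 e \<and> Ro = R2 e"
    have "(INF T \<in> {T. dtree T}. KL_tree (R1 e) T) \<le> Aval (1+e)"
      using INF_le_tree[OF dtree_star[OF d1], of "R1 e"] KA1 by simp
    then have "KL_tree (R1 e) That \<le> Aval (1+e) + e / 100" using H r by simp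
    then have b1: "b = 1" using K1 g by (cases "b = 1") auto
    then show ?thesis using r K1 K2 g e by simp
  next
    assume r: "Rs = R2 e \<and> Ro = R1 e"
    have "(INF T \<in> {T. dtree T}. KL_tree (R2 e) T) \<le> Aval (1+e)"
      using INF_le_tree[OF dtree_star[OF d2], of "R2 e"] KA2 by simp
    then have "KL_tree (R2 e) That \<le> Aval (1+e) + e / 100" using H r by simp
    then have b2: "b = 2" using K2 g by (cases "b = 2") auto
    then show ?thesis using r K1 K2 g e by simp
  qed
qed simp


end
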